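(* Let $x_1,x_2,x_3,x_4\in\mathbb{Z}^3$ be the vertices of a Fano tetrahedron, and let $\lambda_1,\ldots,\lambda_4$ be non-negative integers with $\gcd(\lambda_1,\ldots,\lambda_4)=1$ such that, with $h=\lambda_1+\cdots+\lambda_4$, $\sum_i\lambda_ix_i=0$ (so $\lambda_i/h$ are the barycentric coordinates of the origin). Then (i) $\sum_{i=1}^4\left\lceil\frac{\kappa\lambda_i}{h}\right\rceil=\kappa+2$ for all integers $\kappa\in\{2,\ldots,h-2\}$, and (ii) $\gcd(\lambda_i,h)=1$ for $i=1,\ldots,4$.
   Context: A tetrahedron is called Fano if its vertices lie in $\mathbb{Z}^3$ and the only lattice point it contains other than its vertices is the origin, which lies strictly in its interior. $\lceil q\rceil=\min\{a\in\mathbb{Z}: a\ge q\}$. *)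

theory Defs
  imports "HOL-Analysis.Analysis"
begin

definition rvec :: "int^3 \<Rightarrow> real^3" where
  "rvec v = (\<chi> i. of_int (v $ i))"

definition lattice_point :: "real^3 \<Rightarrow> bool" where
  "lattice_point p \<longleftrightarrow> (\<forall>i. p $ i \<in> \<int>)"

definition fano_tetrahedron :: "(nat \<Rightarrow> int^3) \<Rightarrow> bool" where
  "fano_tetrahedron x \<longleftrightarrow>
     (let V = rvec ` x ` {1..4} in
        card V = 4 \<and> \<not> affine_dependent V \<and>
        0 \<in> interior (convex hull V) \<and>
        (\<forall>p \<in> convex hull V. lattice_point p \<longrightarrow> p \<in> V \<or> p = 0))"

end

theory Submission
  imports Defs
begin

lemma uniq:
  fixes y :: "nat \<Rightarrow> 'a::real_vector"
  assumes inj: "inj_on y {1..4}" and ind: "\<not> affine_dependent (y ` {1..4})"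
    and s: "(\<Sum>i=1..4. a i) = (\<Sum>i=1..4. b i)"
    and v: "(\<Sum>i=1..4. a i *\<^sub>R y i) = (\<Sum>i=1..4. b i *\<^sub>R y i)"
    and j: "j \<in> {1..4}"
  shows "a j = b j"
proof (rule ccontr)
  assume ne: "a j \<noteq> b j"
  define U where "U v = a (inv_into {1..4} y v) - b (inv_into {1..4} y v)" for v
  have r: "sum f (y ` {1..4}) = (\<Sum>i=1..4. f (y i))" for f :: "'a \<Rightarrow> 'b::comm_monoid_add"
    using sum.reindex[OF inj, of f] by simp
  have U: "U (y i) = a i - b i" if "i \<in> {1..4}" for i
    using inv_into_f_f[OF inj that] by (simp add: U_def)
  have "sum U (y ` {1..4}) = (\<Sum>i=1..4. a i - b i)"
    unfolding r by (rule sum.cong) (auto simp: U)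
  then have "sum U (y ` {1..4}) = 0"
    using s by (simp add: sum_subtractf)
  moreover have "sum (\<lambda>v. U v *\<^sub>R v) (y ` {1..4}) = (\<Sum>i=1..4. a i *\<^sub>R y i - b i *\<^sub>R y i)"
    unfolding r by (rule sum.cong) (auto simp: U scaleR_left_diff_distrib)
  then have "sum (\<lambda>v. U v *\<^sub>R v) (y ` {1..4}) = 0"
    using v by (simp add: sum_subtractf)
  moreover have "\<exists>v\<in>y ` {1..4}. U v \<noteq> 0"
    using j ne U by force
  ultimately have "affine_dependent (y ` {1..4})"
    by (subst affine_dependent_explicit_finite) auto
  with ind show False by simp
qed

lemma hullrep:
  fixes y :: "nat \<Rightarrow> 'a::real_vector"
  assumes inj: "inj_on y {1..4}" and p: "p \<in> convex hull (y ` {1..4})"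
  shows "\<exists>g. (\<forall>i\<in>{1..4}. 0 \<le> g i) \<and> (\<Sum>i=1..4. g i) = 1 \<and> (\<Sum>i=1..4. g i *\<^sub>R y i) = p"
proof -
  have r: "sum f (y ` {1..4}) = (\<Sum>i=1..4. f (y i))" for f :: "'a \<Rightarrow> 'b::comm_monoid_add"
    using sum.reindex[OF inj, of f] by simp
  from p obtain u where "\<forall>x\<in>y ` {1..4}. 0 \<le> u x" "sum u (y ` {1..4}) = 1"
     "sum (\<lambda>x. u x *\<^sub>R x) (y ` {1..4}) = p"
    by (auto simp: convex_hull_finite)
  then show ?thesis unfolding r by (intro exI[of _ "\<lambda>i. u (y i)"]) auto
qed

lemma inhull:
  fixes y :: "nat \<Rightarrow> 'a::real_vector"
  assumes "\<forall>i\<in>{1..4}. 0 \<le> g i" "(\<Sum>i=1..4. g i) = 1"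
  shows "(\<Sum>i=1..4. g i *\<^sub>R y i) \<in> convex hull (y ` {1..4})"
  by (rule convex_sum) (use assms in \<open>auto intro: hull_inc\<close>)

lemma sum4: "(\<Sum>i=1..4. f i) = f 1 + f 2 + f 3 + (f (4::nat) :: 'a::comm_monoid_add)"
proof -
  have "{1..4::nat} = {1,2,3,4}" by auto
  then show ?thesis by (simp add: add.assoc)
qed

lemma term_bound:
  fixes a :: real and n :: int
  shows "\<lceil>a\<rceil> + \<lceil>real_of_int n - a\<rceil> \<le> n + 1"
    and "a \<in> \<int> \<Longrightarrow> \<lceil>a\<rceil> + \<lceil>real_of_int n - a\<rceil> = n"
proof -
  have e: "\<lceil>real_of_int n - a\<rceil> = n - \<lfloor>a\<rfloor>"
    by (metis ceiling_minus ceiling_add_of_int diff_conv_add_uminus add.commute)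
  show "\<lceil>a\<rceil> + \<lceil>real_of_int n - a\<rceil> \<le> n + 1"
    using e ceiling_correct[of a] floor_correct[of a] by linarith
  show "a \<in> \<int> \<Longrightarrow> \<lceil>a\<rceil> + \<lceil>real_of_int n - a\<rceil> = n"
    using e by (auto elim!: Ints_cases)
qed

lemma gcd_prop:
  fixes l :: "nat \<Rightarrow> nat" and h :: nat and m :: int
  assumes g: "Gcd (l ` {1..4}) = 1" and d: "\<forall>i\<in>{1..4}. int h dvd m * int (l i)"
  shows "int h dvd m"
proof -
  have "h dvd nat \<bar>m\<bar> * l i" if "i \<in> {1..4}" for i
  proof -
    have "int h dvd m * int (l i)" using d that by blast
    then have "int h dvd \<bar>m * int (l i)\<bar>" by simp
    then have "int h dvd \<bar>m\<bar> * int (l i)" by (simp add: abs_mult)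
    also have "\<bar>m\<bar> * int (l i) = int (nat \<bar>m\<bar> * l i)" by simp
    finally show ?thesis by (simp only: of_nat_dvd_iff)
  qed
  then have "h dvd Gcd ((*) (nat \<bar>m\<bar>) ` l ` {1..4})" by (auto intro: Gcd_greatest)
  moreover have "Gcd ((*) (nat \<bar>m\<bar>) ` l ` {1..4}) = nat \<bar>m\<bar>"
    unfolding Gcd_mult g by simp
  ultimately have "h dvd nat \<bar>m\<bar>" by simp
  then have "int h dvd int (nat \<bar>m\<bar>)" by (simp only: of_nat_dvd_iff)
  then show ?thesis by simp
qed

lemma lemA:
  fixes y :: "nat \<Rightarrow> real^3" and l :: "nat \<Rightarrow> nat" and h :: nat and k :: int
  assumes inj: "inj_on y {1..4}" and ind: "\<not> affine_dependent (y ` {1..4})"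
    and latt: "\<forall>p\<in>convex hull (y ` {1..4}). lattice_point p \<longrightarrow> p \<in> y ` {1..4} \<or> p = 0"
    and ylat: "\<forall>i. lattice_point (y i)"
    and hpos: "h > 0" and hs: "h = (\<Sum>i=1..4. l i)"
    and bal: "(\<Sum>i=1..4. real (l i) *\<^sub>R y i) = 0"
    and gcdd: "\<And>m::int. (\<forall>i\<in>{1..4}. int h dvd m * int (l i)) \<Longrightarrow> int h dvd m"
    and nk: "\<not> int h dvd k" "\<not> int h dvd (k+1)"
  shows "(\<Sum>i=1..4. \<lceil>real_of_int k * real (l i) / real h\<rceil>) \<ge> k + 2"
proof (rule ccontr)
  assume con: "\<not> ?thesis"
  define C where "C i = \<lceil>real_of_int k * real (l i) / real h\<rceil>" for i
  define c where "c i = real_of_int (C i) - real_of_int k * real (l i) / real h" for i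
  have c0: "0 \<le> c i" and c1: "c i < 1" for i
    using ceiling_correct[of "real_of_int k * real (l i) / real h"] by (auto simp: c_def C_def)
  define S where "S = (\<Sum>i=1..4. C i)"
  have hr: "real h = (\<Sum>i=1..4. real (l i))" using hs by simp
  have "(\<Sum>i=1..4. c i) = real_of_int S - (\<Sum>i=1..4. real_of_int k * real (l i) / real h)"
    by (simp add: c_def S_def sum_subtractf)
  also have "(\<Sum>i=1..4. real_of_int k * real (l i) / real h) = real_of_int k * (\<Sum>i=1..4. real (l i)) / real h"
    by (simp add: sum_divide_distrib sum_distrib_left)
  also have "\<dots> = real_of_int k" using hpos hr by simp
  finally have sumc: "(\<Sum>i=1..4. c i) = real_of_int S - real_of_int k" .
  have "(\<Sum>i=1..4. c i *\<^sub>R y i) = (\<Sum>i=1..4. real_of_int (C i) *\<^sub>R y i) - (\<Sum>i=1..4. (real_of_int k / real h) *\<^sub>R (real (l i) *\<^sub>R y i))"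
    by (simp add: c_def scaleR_left_diff_distrib sum_subtractf)
  also have "(\<Sum>i=1..4. (real_of_int k / real h) *\<^sub>R (real (l i) *\<^sub>R y i)) = (real_of_int k / real h) *\<^sub>R (\<Sum>i=1..4. real (l i) *\<^sub>R y i)"
    by (rule scaleR_sum_right[symmetric])
  also have "\<dots> = 0" using bal by simp
  finally have q: "(\<Sum>i=1..4. c i *\<^sub>R y i) = (\<Sum>i=1..4. real_of_int (C i) *\<^sub>R y i)" by simp
  have qlat: "lattice_point (\<Sum>i=1..4. c i *\<^sub>R y i)"
    unfolding q lattice_point_def
  proof
    fix j
    show "(\<Sum>i=1..4. real_of_int (C i) *\<^sub>R y i) $ j \<in> \<int>"
      using ylat unfolding lattice_point_def by (auto intro!: Ints_sum Ints_mult)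
  qed
  have "0 \<le> (\<Sum>i=1..4. c i)" using c0 by (simp add: sum_nonneg)
  then have "S = k \<or> S = k + 1" using con sumc unfolding S_def C_def by linarith
  then show False
  proof
    assume "S = k"
    then have "(\<Sum>i=1..4. c i) = 0" using sumc by simp
    then have cz: "\<forall>i\<in>{1..4}. c i = 0" using c0 by (simp add: sum_nonneg_eq_0_iff)
    have "int h dvd k * int (l i)" if "i \<in> {1..4}" for i
    proof -
      have "real_of_int (C i) = real_of_int k * real (l i) / real h" using cz that by (simp add: c_def)
      then have "real_of_int (C i * int h) = real_of_int (k * int (l i))" using hpos by (simp add: field_simps)
      then have "C i * int h = k * int (l i)" by (simp only: of_int_eq_iff)
      then show ?thesis by (metis dvd_triv_right)
    qed
    then show False using gcdd nk by blast
  next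
    assume "S = k + 1"
    then have s1: "(\<Sum>i=1..4. c i) = 1" using sumc by simp
    have inh: "(\<Sum>i=1..4. c i *\<^sub>R y i) \<in> convex hull (y ` {1..4})"
      using inhull[of c, OF _ s1] c0 by auto
    then have "(\<Sum>i=1..4. c i *\<^sub>R y i) \<in> y ` {1..4} \<or> (\<Sum>i=1..4. c i *\<^sub>R y i) = 0"
      using latt qlat by blast
    then show False
    proof
      assume "(\<Sum>i=1..4. c i *\<^sub>R y i) \<in> y ` {1..4}"
      then obtain j where j: "j \<in> {1..4}" "(\<Sum>i=1..4. c i *\<^sub>R y i) = y j" by auto
      have "c j = (if j = j then 1 else 0)"
      proof (rule uniq[OF inj ind _ _ j(1), where b="\<lambda>i. if i = j then 1 else 0"])
        show "(\<Sum>i=1..4. c i) = (\<Sum>i=1..4. if i = j then 1 else 0)" using s1 j(1) by simp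
        show "(\<Sum>i=1..4. c i *\<^sub>R y i) = (\<Sum>i=1..4. (if i = j then 1 else 0) *\<^sub>R y i)"
        proof -
          have "(\<Sum>i=1..4. (if i = j then 1 else 0) *\<^sub>R y i) = (\<Sum>i=1..4. if i = j then y i else 0)"
            by (rule sum.cong) auto
          also have "\<dots> = y j" using j(1) by (subst sum.delta) auto
          finally have e: "(\<Sum>i=1..4. (if i = j then 1 else 0) *\<^sub>R y i) = y j" .
          show ?thesis by (simp only: e j(2))
        qed
      qed
      then show False using c1[of j] by simp
    next
      assume q0: "(\<Sum>i=1..4. c i *\<^sub>R y i) = 0"
      have "int h dvd (k + 1) * int (l i)" if i: "i \<in> {1..4}" for i
      proof -
        have "c i = real (l i) / real h"
        proof (rule uniq[OF inj ind _ _ i, where b="\<lambda>i. real (l i) / real h"])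
          show "(\<Sum>i=1..4. c i) = (\<Sum>i=1..4. real (l i) / real h)"
            using s1 hpos hr by (simp add: sum_divide_distrib[symmetric])
          have "(\<Sum>i=1..4. (real (l i) / real h) *\<^sub>R y i) = (1 / real h) *\<^sub>R (\<Sum>i=1..4. real (l i) *\<^sub>R y i)"
            by (simp add: scaleR_sum_right)
          then show "(\<Sum>i=1..4. c i *\<^sub>R y i) = (\<Sum>i=1..4. (real (l i) / real h) *\<^sub>R y i)"
            using q0 bal by simp
        qed
        then have "real_of_int (C i) = real_of_int (k + 1) * real (l i) / real h"
          by (simp add: c_def add_divide_distrib distrib_right)
        then have "real_of_int (C i * int h) = real_of_int ((k + 1) * int (l i))" using hpos by (simp add: field_simps)
        then have "C i * int h = (k + 1) * int (l i)" by (simp only: of_int_eq_iff)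
        then show ?thesis by (metis dvd_triv_right)
      qed
      then show False using gcdd nk by blast
    qed
  qed
qed


lemma aux_frac:
  fixes a :: real
  assumes "0 \<le> a"
  shows "a / (2 * (a + 1)) < 1"
proof -
  have p1: "0 < a + 1" using assms by (rule add_nonneg_pos) simp
  have p: "0 < 2 * (a + 1)" using p1 by (rule mult_pos_pos[rotated]) simp
  have "a < 2 * (a + 1)" using assms by (simp add: algebra_simps)
  then show ?thesis unfolding pos_divide_less_eq[OF p] by simp
qed

lemma lpos:
  fixes y :: "nat \<Rightarrow> real^3" and l :: "nat \<Rightarrow> nat" and h :: nat
  assumes inj: "inj_on y {1..4}" and ind: "\<not> affine_dependent (y ` {1..4})"
    and int0: "0 \<in> interior (convex hull (y ` {1..4}))"
    and hpos: "h > 0" and hs: "h = (\<Sum>i=1..4. l i)"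
    and bal: "(\<Sum>i=1..4. real (l i) *\<^sub>R y i) = 0"
    and j: "j \<in> {1..4}"
  shows "l j > 0"
proof (rule ccontr)
  assume "\<not> l j > 0"
  then have lj: "l j = 0" by simp
  obtain e where e: "e > 0" "ball 0 e \<subseteq> convex hull (y ` {1..4})"
    using int0 by (auto simp: mem_interior)
  define t where "t = e / (2 * (norm (y j) + 1))"
  have t0: "t > 0" unfolding t_def using e(1) by (intro divide_pos_pos) (auto intro: add_nonneg_pos)
  have "t * norm (y j) < e"
  proof -
    have "t * norm (y j) = e * (norm (y j) / (2 * (norm (y j) + 1)))" by (simp add: t_def)
    also have "\<dots> < e * 1"
    proof (intro mult_strict_left_mono)
      show "norm (y j) / (2 * (norm (y j) + 1)) < 1" by (rule aux_frac) simp
    qed (use e in auto)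
    finally show ?thesis by simp
  qed
  then have "(- t) *\<^sub>R y j \<in> ball 0 e" using t0 by simp
  then have "(- t) *\<^sub>R y j \<in> convex hull (y ` {1..4})" using e by blast
  then obtain g where g: "\<forall>i\<in>{1..4}. 0 \<le> g i" "(\<Sum>i=1..4. g i) = 1"
    "(\<Sum>i=1..4. g i *\<^sub>R y i) = (- t) *\<^sub>R y j"
    using hullrep[OF inj] by blast
  have hr: "real h = (\<Sum>i=1..4. real (l i))" using hs by simp
  have "g j + (if j = j then t else 0) = (1 + t) * real (l j) / real h"
  proof (rule uniq[OF inj ind _ _ j, where a="\<lambda>i. g i + (if i = j then t else 0)"
        and b="\<lambda>i. (1 + t) * real (l i) / real h"])
    have "(\<Sum>i=1..4. g i + (if i = j then t else 0)) = 1 + t"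
      using g(2) j by (simp add: sum.distrib sum.delta)
    moreover have "(\<Sum>i=1..4. (1 + t) * real (l i) / real h) = 1 + t"
      using hpos hr by (simp add: sum_divide_distrib[symmetric] sum_distrib_left[symmetric])
    ultimately show "(\<Sum>i=1..4. g i + (if i = j then t else 0)) = (\<Sum>i=1..4. (1 + t) * real (l i) / real h)"
      by simp
    have "(\<Sum>i=1..4. (g i + (if i = j then t else 0)) *\<^sub>R y i)
        = (\<Sum>i=1..4. g i *\<^sub>R y i + (if i = j then t *\<^sub>R y i else 0))"
      by (rule sum.cong) (auto simp: scaleR_left_distrib)
    also have "\<dots> = (\<Sum>i=1..4. g i *\<^sub>R y i) + (\<Sum>i=1..4. (if i = j then t *\<^sub>R y i else 0))"
      by (rule sum.distrib)
    also have "\<dots> = 0" using g(3) j by (subst sum.delta) auto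
    finally have A: "(\<Sum>i=1..4. (g i + (if i = j then t else 0)) *\<^sub>R y i) = 0" .
    have "(\<Sum>i=1..4. ((1 + t) * real (l i) / real h) *\<^sub>R y i)
        = ((1 + t) / real h) *\<^sub>R (\<Sum>i=1..4. real (l i) *\<^sub>R y i)"
      by (simp add: scaleR_sum_right)
    also have "\<dots> = 0" using bal by simp
    finally show "(\<Sum>i=1..4. (g i + (if i = j then t else 0)) *\<^sub>R y i) = (\<Sum>i=1..4. ((1 + t) * real (l i) / real h) *\<^sub>R y i)"
      using A by simp
  qed
  then show False using lj g(1) j t0 by force
qed


lemma rvec_sum: "rvec (sum f A) = (\<Sum>i\<in>A. rvec (f i))"
  by (simp add: rvec_def vec_eq_iff)

lemma rvec_scale: "rvec (c *s v) = real_of_int c *\<^sub>R rvec v"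
  by (simp add: rvec_def vec_eq_iff)

lemma rvec_lat: "lattice_point (rvec v)"
  by (simp add: rvec_def lattice_point_def)

lemma termlem:
  fixes h :: nat and k :: int and n :: nat
  assumes "h > 0"
  shows "\<lceil>real_of_int k * real n / real h\<rceil> + \<lceil>real_of_int (int h - k) * real n / real h\<rceil> \<le> int n + 1"
    and "int h dvd k * int n \<Longrightarrow>
      \<lceil>real_of_int k * real n / real h\<rceil> + \<lceil>real_of_int (int h - k) * real n / real h\<rceil> = int n"
proof -
  have e: "real_of_int (int h - k) * real n / real h = real_of_int (int n) - real_of_int k * real n / real h"
    using assms by (simp add: field_simps)
  show "\<lceil>real_of_int k * real n / real h\<rceil> + \<lceil>real_of_int (int h - k) * real n / real h\<rceil> \<le> int n + 1"
    unfolding e by (rule term_bound(1))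
  assume d: "int h dvd k * int n"
  then obtain m where m: "k * int n = int h * m" by blast
  have "real_of_int k * real n / real h = real_of_int m"
  proof -
    have "real_of_int (k * int n) = real_of_int (int h * m)" using m by simp
    then show ?thesis using assms by (simp add: field_simps)
  qed
  then have "real_of_int k * real n / real h \<in> \<int>" by simp
  then show "\<lceil>real_of_int k * real n / real h\<rceil> + \<lceil>real_of_int (int h - k) * real n / real h\<rceil> = int n"
    unfolding e by (rule term_bound(2))
qed

theorem corollary2p6:
  fixes x :: "nat \<Rightarrow> int^3" and l :: "nat \<Rightarrow> nat" and h :: nat
  assumes "fano_tetrahedron x"
    and "Gcd (l ` {1..4}) = 1"
    and "h = (\<Sum>i=1..4. l i)"
    and "(\<Sum>i=1..4. int (l i) *s x i) = 0"
  shows "(\<forall>\<kappa>::int. 2 \<le> \<kappa> \<and> \<kappa> \<le> int h - 2 \<longrightarrow>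
            (\<Sum>i=1..4. \<lceil>real_of_int \<kappa> * real (l i) / real h\<rceil>) = \<kappa> + 2)
       \<and> (\<forall>i\<in>{1..4}. gcd (l i) h = 1)"
proof -
  define y where "y i = rvec (x i)" for i
  have V: "rvec ` x ` {1..4} = y ` {1..4}" by (auto simp: y_def)
  from assms(1) have card: "card (y ` {1..4}) = 4" and ind: "\<not> affine_dependent (y ` {1..4})"
    and int0: "0 \<in> interior (convex hull (y ` {1..4}))"
    and latt: "\<forall>p\<in>convex hull (y ` {1..4}). lattice_point p \<longrightarrow> p \<in> y ` {1..4} \<or> p = 0"
    unfolding fano_tetrahedron_def Let_def V by auto
  have inj: "inj_on y {1..4}" using card by (simp add: inj_on_iff_eq_card)
  have ylat: "\<forall>i. lattice_point (y i)" by (simp add: y_def rvec_lat)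
  have bal: "(\<Sum>i=1..4. real (l i) *\<^sub>R y i) = 0"
  proof -
    have "rvec (\<Sum>i=1..4. int (l i) *s x i) = 0" using assms(4) by (simp add: rvec_def vec_eq_iff)
    then show ?thesis by (simp add: rvec_sum rvec_scale y_def)
  qed
  have gcdd: "\<And>m::int. (\<forall>i\<in>{1..4}. int h dvd m * int (l i)) \<Longrightarrow> int h dvd m"
    using gcd_prop[OF assms(2)] by blast
  have hpos: "h > 0"
  proof (rule ccontr)
    assume "\<not> h > 0"
    then have "\<forall>i\<in>{1..4}. l i = 0" using assms(3) by simp
    then have "l ` {1..4} = {0}" by force
    then show False using assms(2) by simp
  qed
  have lp: "\<forall>j\<in>{1..4}. l j > 0"
    using lpos[OF inj ind int0 hpos assms(3) bal] by blast
  have l4: "l 1 > 0" "l 2 > 0" "l 3 > 0" "l 4 > 0" using lp by auto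
  have j4: "j = 1 \<or> j = 2 \<or> j = 3 \<or> j = 4" if "j \<in> {1..4::nat}" for j
    using that by auto
  have lh: "l j < h" if "j \<in> {1..4}" for j
    using j4[OF that] l4 unfolding assms(3) sum4 by auto
  define S where "S k = (\<Sum>i=1..4. \<lceil>real_of_int k * real (l i) / real h\<rceil>)" for k :: int
  have SA: "S k \<ge> k + 2" if "2 \<le> k" "k \<le> int h - 2" for k
  proof -
    have "\<not> int h dvd k" using that zdvd_not_zless[of k "int h"] by auto
    moreover have "\<not> int h dvd (k + 1)" using that zdvd_not_zless[of "k+1" "int h"] by auto
    ultimately show ?thesis unfolding S_def
      using lemA[OF inj ind latt ylat hpos assms(3) bal gcdd] by blast
  qed
  have SB: "S k + S (int h - k) = (\<Sum>i=1..4. \<lceil>real_of_int k * real (l i) / real h\<rceil> + \<lceil>real_of_int (int h - k) * real (l i) / real h\<rceil>)" for k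
    unfolding S_def by (simp add: sum.distrib)
  have hi: "int h = (\<Sum>i=1..4. int (l i))" using assms(3) by simp
  have SB1: "S k + S (int h - k) \<le> int h + 4" for k
  proof -
    have "S k + S (int h - k) \<le> (\<Sum>i=1..4. int (l i) + 1)"
      unfolding SB by (rule sum_mono) (rule termlem(1)[OF hpos])
    then show ?thesis unfolding hi by (simp add: sum.distrib)
  qed
  have part1: "S k = k + 2" if "2 \<le> k" "k \<le> int h - 2" for k
    using SA[OF that] SA[of "int h - k"] SB1[of k] that by auto
  have part2: "gcd (l j) h = 1" if j: "j \<in> {1..4}" for j
  proof (rule ccontr)
    assume ne: "gcd (l j) h \<noteq> 1"
    define d where "d = gcd (l j) h"
    have d0: "d > 0" using hpos by (simp add: d_def)
    have d2: "d \<ge> 2" using ne d0 d_def by linarith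
    have dl: "d dvd l j" "d dvd h" by (auto simp: d_def)
    have "d \<le> l j" using dl(1) lp j by (simp add: dvd_imp_le)
    then have dh: "d < h" using lh[OF j] by simp
    define k where "k = h div d"
    have hk: "h = d * k" using dl(2) by (simp add: k_def)
    have k2: "k \<ge> 2"
    proof -
      have "k \<noteq> 0" using hk hpos by auto
      moreover have "k \<noteq> 1" using hk dh by auto
      ultimately show ?thesis by linarith
    qed
    have "2 * k \<le> h" using hk d2 by simp
    then have kr: "2 \<le> int k" "int k \<le> int h - 2" using k2 by linarith+
    have kr2: "2 \<le> int h - int k" "int h - int k \<le> int h - 2" using kr by linarith+
    obtain m where m: "l j = d * m" using dl(1) by blast
    have dvd: "int h dvd int k * int (l j)" using hk m by (simp add: dvd_def)
    have T: "\<lceil>real_of_int (int k) * real (l i) / real h\<rceil> + \<lceil>real_of_int (int h - int k) * real (l i) / real h\<rceil> - int (l i) \<le> (if i = j then 0 else 1)" for i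
      using termlem[OF hpos, of "int k" "l i"] dvd by auto
    let ?A = "\<lambda>i. \<lceil>real_of_int (int k) * real (l i) / real h\<rceil> + \<lceil>real_of_int (int h - int k) * real (l i) / real h\<rceil>"
    have e: "(\<Sum>i=1..4. ?A i - int (l i)) = (\<Sum>i=1..4. ?A i) - (\<Sum>i=1..4. int (l i))"
      by (rule sum_subtractf)
    have "S (int k) + S (int h - int k) - int h = (\<Sum>i=1..4. ?A i - int (l i))"
      by (simp only: SB[of "int k"] e hi[symmetric])
    also have "\<dots> \<le> (\<Sum>i=1..4. (if i = j then 0 else 1))"
      by (rule sum_mono) (rule T)
    also have "\<dots> = 3" using j4[OF j] unfolding sum4 by auto
    finally show False using part1[OF kr] part1[OF kr2] by simp
  qed
  show ?thesis using part1 part2 unfolding S_def by blast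
qed

thm_deps corollary2p6 lemA lpos uniq hullrep inhull gcd_prop termlem term_bound sum4 aux_frac rvec_sum rvec_scale rvec_lat

end
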